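(* Let $T\ge1$, $\delta>0$, and let $A$ be a smooth connection on the trivial principal $G$-bundle over $\mathcal C_T$ satisfying $D_A^*F_A=\lambda B$, where $B$ is a $\mathfrak g$-valued 1-form with $\|B\|_{L^\infty(\mathcal C_T)}\le C_B$ and $\lambda=\lambda(t)$ satisfies $|\lambda(t)|\le C_0\delta e^{|t|-T}$ for $t\in[-T,T]$. Assume $\|F_A\|_{L^2(\mathcal C_t)}\le C_0\delta e^{t-T}$ for all $t\in(0,T]$, and that $\|F_A\|_{L^2(\mathcal C_T)}$ is small enough that on every disk of radius $1$ in $\mathcal C_T$ there is a Coulomb gauge ($d^*A=0$) with $\|A\|_{W^{1,2}}\le C\|F_A\|_{L^2}$. Then there is a constant $C$ depending only on $C_0,C_B$ and $G$ such that $$\|F_A\|_{L^\infty(\mathcal C_{t-1})}\le C\delta e^{t-T}\quad\text{for all }t\in[1,T].$$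
   Context: $G$ is a compact connected Lie group with Lie algebra $\mathfrak g$ (with an $\mathrm{Ad}$-invariant inner product). For $T>0$, $\mathcal C_T=[-T,T]\times S^1$ with coordinates $(t,\theta)$ and flat metric $dt^2+d\theta^2$; $\mathcal C_t=[-t,t]\times S^1$. A connection on the trivial bundle is a $\mathfrak g$-valued 1-form $A$, $D_A=d+A$ is the induced exterior covariant derivative, $D_A^*$ its formal adjoint, and $F_A=dA+\tfrac12[A,A]$ its curvature. *)

theory Defs
  imports "HOL-Analysis.Analysis"
begin

text \<open>Coordinates on the (universal cover of the) cylinder: points p = (t, theta) of real \<times> real.
  The circle S^1 is R / 2 pi Z; objects on the cylinder are 2 pi-periodic in theta.\<close>

definition dT :: "(real \<times> real \<Rightarrow> 'b::real_normed_vector) \<Rightarrow> real \<times> real \<Rightarrow> 'b" where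
  "dT f p = vector_derivative (\<lambda>s. f (s, snd p)) (at (fst p))"

definition dTh :: "(real \<times> real \<Rightarrow> 'b::real_normed_vector) \<Rightarrow> real \<times> real \<Rightarrow> 'b" where
  "dTh f p = vector_derivative (\<lambda>s. f (fst p, s)) (at (snd p))"

fun Ck :: "nat \<Rightarrow> (real \<times> real) set \<Rightarrow> (real \<times> real \<Rightarrow> 'b::real_normed_vector) \<Rightarrow> bool" where
  "Ck 0 U f = continuous_on U f"
| "Ck (Suc k) U f = ((\<forall>p\<in>U. f differentiable (at p)) \<and> Ck k U (dT f) \<and> Ck k U (dTh f))"

definition smooth_on :: "(real \<times> real) set \<Rightarrow> (real \<times> real \<Rightarrow> 'b::real_normed_vector) \<Rightarrow> bool" where
  "smooth_on U f \<longleftrightarrow> (\<forall>k. Ck k U f)"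

text \<open>Compact connected Lie group, realised as a closed (compact) connected subgroup of O(n).
  The Ad-invariant inner product on its Lie algebra is the Frobenius one (norm on real^'n^'n).\<close>
definition compact_matrix_group :: "(real^'n^'n) set \<Rightarrow> bool" where
  "compact_matrix_group G \<longleftrightarrow> compact G \<and> connected G \<and> mat 1 \<in> G \<and>
     (\<forall>x\<in>G. \<forall>y\<in>G. x ** y \<in> G) \<and> (\<forall>x\<in>G. matrix_inv x \<in> G) \<and>
     (\<forall>x\<in>G. orthogonal_matrix x)"

definition lie_alg :: "(real^'n^'n) set \<Rightarrow> (real^'n^'n) set" where
  "lie_alg G = {X. \<exists>c. (\<forall>s. c s \<in> G) \<and> c 0 = mat 1 \<and> (c has_vector_derivative X) (at 0)}"

definition lbr :: "real^'n^'n \<Rightarrow> real^'n^'n \<Rightarrow> real^'n^'n" where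
  "lbr X Y = X ** Y - Y ** X"

text \<open>Connection A = a1 dt + a2 dtheta. Curvature F_A = f dt\<and>dtheta with
  f = d_t a2 - d_theta a1 + [a1,a2].\<close>
definition curv :: "(real \<times> real \<Rightarrow> real^'n^'n) \<Rightarrow> (real \<times> real \<Rightarrow> real^'n^'n) \<Rightarrow> real \<times> real \<Rightarrow> real^'n^'n" where
  "curv a1 a2 p = dT a2 p - dTh a1 p + lbr (a1 p) (a2 p)"

text \<open>D_A^* (f dt\<and>dtheta) = (nabla_theta f) dt - (nabla_t f) dtheta, nabla_i f = d_i f + [a_i, f].
  We give its dt- and dtheta-components.\<close>
definition DAstar1 where
  "DAstar1 a1 a2 f p = dTh f p + lbr (a2 p) (f p)"
definition DAstar2 where
  "DAstar2 a1 a2 f p = - (dT f p + lbr (a1 p) (f p))"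

text \<open>The truncated cylinder C_t = [-t,t] \<times> S^1 (fundamental domain theta in [0, 2 pi]).\<close>
definition cyl :: "real \<Rightarrow> (real \<times> real) set" where
  "cyl t = {-t..t} \<times> {0..2*pi}"

definition L2norm :: "(real \<times> real) set \<Rightarrow> (real \<times> real \<Rightarrow> real^'n^'n) \<Rightarrow> real" where
  "L2norm S f = sqrt (integral S (\<lambda>p. (norm (f p))\<^sup>2))"

text \<open>Gauge transform of A by u: u^{-1} A u + u^{-1} du (u orthogonal, u^{-1} = u^T).\<close>
definition gauge_comp where
  "gauge_comp u a d p = transpose (u p) ** a p ** u p + transpose (u p) ** d u p"

definition coulomb_gauge_on where
  "coulomb_gauge_on G Cc a1 a2 D \<longleftrightarrow>
     (\<exists>u. smooth_on D u \<and> (\<forall>p\<in>D. u p \<in> G) \<and>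
       (let b1 = gauge_comp u a1 dT; b2 = gauge_comp u a2 dTh;
            w = (\<lambda>p. (norm (b1 p))\<^sup>2 + (norm (b2 p))\<^sup>2 + (norm (dT b1 p))\<^sup>2 + (norm (dTh b1 p))\<^sup>2
                       + (norm (dT b2 p))\<^sup>2 + (norm (dTh b2 p))\<^sup>2)
        in (\<forall>p\<in>D. dT b1 p + dTh b2 p = 0) \<and> w integrable_on D \<and>
           sqrt (integral D w) \<le> Cc * L2norm D (curv a1 a2)))"

end

theory Submission imports Defs begin

lemma bb_mm: "bounded_bilinear (\<lambda>x y::real^'n^'n. x ** y)"
proof -
  have "bilinear (\<lambda>x y::real^'n^'n. x ** y)"
    unfolding bilinear_def
    by (auto intro!: linearI simp: matrix_matrix_mult_def vec_eq_iff sum.distrib algebra_simps sum_distrib_left scaleR_sum_right)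
  then show ?thesis using bilinear_conv_bounded_bilinear by blast
qed

definition skw :: "real^'n^'n \<Rightarrow> bool" where "skw X \<longleftrightarrow> (\<forall>i j. X$i$j = - X$j$i)"

lemma skw_inner_lbr:
  fixes a f :: "real^'n^'n"
  assumes "skw a" shows "f \<bullet> lbr a f = 0"
proof -
  have sk: "a$i$k = - a$k$i" for i k using assms unfolding skw_def by blast
  have S1: "(\<Sum>i\<in>UNIV. \<Sum>j\<in>UNIV. \<Sum>k\<in>UNIV. f$i$j * a$i$k * f$k$j) = 0"
  proof -
    have A: "(\<Sum>i\<in>UNIV. \<Sum>j\<in>UNIV. \<Sum>k\<in>UNIV. f$i$j * a$i$k * f$k$j)
        = (\<Sum>i\<in>UNIV. \<Sum>k\<in>UNIV. \<Sum>j\<in>UNIV. f$i$j * a$i$k * f$k$j)"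
      by (rule sum.cong[OF refl], rule sum.swap)
    have "(\<Sum>i\<in>UNIV. \<Sum>k\<in>UNIV. \<Sum>j\<in>UNIV. f$i$j * a$i$k * f$k$j)
       = (\<Sum>k\<in>UNIV. \<Sum>i\<in>UNIV. \<Sum>j\<in>UNIV. f$i$j * a$i$k * f$k$j)"
      by (rule sum.swap)
    also have "\<dots> = (\<Sum>k\<in>UNIV. \<Sum>i\<in>UNIV. \<Sum>j\<in>UNIV. - (f$k$j * a$k$i * f$i$j))"
      by (intro sum.cong refl) (subst sk, simp)
    also have "\<dots> = - (\<Sum>k\<in>UNIV. \<Sum>i\<in>UNIV. \<Sum>j\<in>UNIV. f$k$j * a$k$i * f$i$j)"
      by (simp only: sum_negf)
    finally show ?thesis unfolding A by simp
  qed
  have S2: "(\<Sum>i\<in>UNIV. \<Sum>j\<in>UNIV. \<Sum>k\<in>UNIV. f$i$j * f$i$k * a$k$j) = 0"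
  proof -
    have "(\<Sum>i\<in>UNIV. \<Sum>j\<in>UNIV. \<Sum>k\<in>UNIV. f$i$j * f$i$k * a$k$j)
        = (\<Sum>i\<in>UNIV. \<Sum>k\<in>UNIV. \<Sum>j\<in>UNIV. f$i$j * f$i$k * a$k$j)"
      by (rule sum.cong[OF refl], rule sum.swap)
    also have "\<dots> = (\<Sum>i\<in>UNIV. \<Sum>k\<in>UNIV. \<Sum>j\<in>UNIV. - (f$i$k * f$i$j * a$j$k))"
      by (intro sum.cong refl) (subst sk, simp)
    also have "\<dots> = - (\<Sum>i\<in>UNIV. \<Sum>j\<in>UNIV. \<Sum>k\<in>UNIV. f$i$j * f$i$k * a$k$j)"
      by (simp only: sum_negf)
    finally show ?thesis by simp
  qed
  have e1: "f \<bullet> (a ** f) = (\<Sum>i\<in>UNIV. \<Sum>j\<in>UNIV. \<Sum>k\<in>UNIV. f$i$j * a$i$k * f$k$j)"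
    by (simp add: inner_vec_def matrix_matrix_mult_def sum_distrib_left mult.assoc)
  have e2: "f \<bullet> (f ** a) = (\<Sum>i\<in>UNIV. \<Sum>j\<in>UNIV. \<Sum>k\<in>UNIV. f$i$j * f$i$k * a$k$j)"
    by (simp add: inner_vec_def matrix_matrix_mult_def sum_distrib_left mult.assoc)
  show ?thesis unfolding lbr_def inner_diff_right e1 e2 S1 S2 by simp
qed
lemma bl_transpose: "bounded_linear (transpose :: real^'n^'n \<Rightarrow> real^'n^'n)"
proof -
  have "linear (transpose :: real^'n^'n \<Rightarrow> real^'n^'n)"
    by (auto intro!: linearI simp: transpose_def vec_eq_iff)
  then show ?thesis using linear_conv_bounded_linear by blast
qed

lemma lie_skw:
  assumes G: "compact_matrix_group G" and X: "X \<in> lie_alg G"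
  shows "skw X"
proof -
  obtain c where c: "\<And>s. c s \<in> G" "c 0 = mat 1" "(c has_vector_derivative X) (at 0)"
    using X unfolding lie_alg_def by blast
  have orth: "transpose (c s) ** c s = mat 1" for s
    using G c(1) unfolding compact_matrix_group_def orthogonal_matrix by blast
  have d1: "(c has_derivative (\<lambda>h. h *\<^sub>R X)) (at 0)" using c(3) by (simp add: has_vector_derivative_def)
  have d2: "((\<lambda>s. transpose (c s)) has_derivative (\<lambda>h. transpose (h *\<^sub>R X))) (at 0)"
    using bounded_linear.has_derivative[OF bl_transpose d1] .
  have "((\<lambda>s. transpose (c s) ** c s) has_derivative
        (\<lambda>h. transpose (c 0) ** (h *\<^sub>R X) + transpose (h *\<^sub>R X) ** c 0)) (at 0)"
    using bounded_bilinear.FDERIV[OF bb_mm d2 d1] .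
  moreover have "((\<lambda>s. transpose (c s) ** c s) has_derivative (\<lambda>h. 0)) (at 0)"
    unfolding orth by simp
  ultimately have "(\<lambda>h. transpose (c 0) ** (h *\<^sub>R X) + transpose (h *\<^sub>R X) ** c 0) = (\<lambda>h. 0)"
    using has_derivative_unique by blast
  then have "transpose (c 0) ** (1 *\<^sub>R X) + transpose (1 *\<^sub>R X) ** c 0 = 0" by meson
  then have "X + transpose X = 0" using c(2) by (simp add: transpose_mat)
  then show ?thesis unfolding skw_def by (auto simp: vec_eq_iff transpose_def eq_neg_iff_add_eq_0)
qed
lemma vd_shift:
  fixes g :: "real \<Rightarrow> 'a::real_normed_vector"
  shows "vector_derivative g (at (x + c)) = vector_derivative (\<lambda>s. g (s + c)) (at x)"
proof -
  have "(g has_vector_derivative D) (at (x + c)) \<longleftrightarrow> ((\<lambda>s. g (s + c)) has_vector_derivative D) (at x)" for D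
  proof
    assume "(g has_vector_derivative D) (at (x + c))"
    moreover have "((\<lambda>s. s + c) has_vector_derivative 1) (at x)"
      by (auto intro!: derivative_eq_intros)
    ultimately have "((g \<circ> (\<lambda>s. s + c)) has_vector_derivative (1 *\<^sub>R D)) (at x)"
      using vector_diff_chain_at by (metis (no_types))
    then show "((\<lambda>s. g (s + c)) has_vector_derivative D) (at x)" by (simp add: o_def)
  next
    assume a: "((\<lambda>s. g (s + c)) has_vector_derivative D) (at x)"
    have "((\<lambda>s. s - c) has_vector_derivative 1) (at (x + c))"
      by (auto intro!: derivative_eq_intros)
    moreover have "((\<lambda>s. g (s + c)) has_vector_derivative D) (at ((\<lambda>s. s - c) (x + c)))" using a by simp
    ultimately have "(((\<lambda>s. g (s + c)) \<circ> (\<lambda>s. s - c)) has_vector_derivative (1 *\<^sub>R D)) (at (x + c))"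
      by (rule vector_diff_chain_at)
    then show "(g has_vector_derivative D) (at (x + c))" by (simp add: o_def)
  qed
  then show ?thesis unfolding vector_derivative_def by simp
qed

lemma curv_periodic:
  assumes "\<forall>t s. a1 (t, s + 2*pi) = a1 (t, s) \<and> a2 (t, s + 2*pi) = a2 (t, s)"
  shows "curv a1 a2 (t, s + 2*pi) = curv a1 a2 (t, s)"
proof -
  have A1: "a1 (t', s' + 2*pi) = a1 (t', s')" "a2 (t', s' + 2*pi) = a2 (t', s')" for t' s' using assms by auto
  have "dT a2 (t, s + 2*pi) = dT a2 (t, s)" unfolding dT_def by (simp add: A1)
  moreover have "dTh a1 (t, s + 2*pi) = dTh a1 (t, s)"
    unfolding dTh_def by (simp add: vd_shift A1)
  ultimately show ?thesis unfolding curv_def by (simp add: A1)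
qed

lemma curv_periodic_int:
  assumes "\<forall>t s. a1 (t, s + 2*pi) = a1 (t, s) \<and> a2 (t, s + 2*pi) = a2 (t, s)"
  shows "curv a1 a2 (t, s + 2 * pi * of_int k) = curv a1 a2 (t, s)"
proof (induction k rule: int_induct[where k = 0])
  case base then show ?case by simp
next
  case (step1 i)
  have "curv a1 a2 (t, s + 2 * pi * of_int (i+1)) = curv a1 a2 (t, (s + 2 * pi * of_int i) + 2*pi)"
    by (simp add: algebra_simps)
  also have "\<dots> = curv a1 a2 (t, s + 2 * pi * of_int i)" by (rule curv_periodic[OF assms])
  finally show ?case using step1 by simp
next
  case (step2 i)
  have "curv a1 a2 (t, s + 2 * pi * of_int i) = curv a1 a2 (t, (s + 2 * pi * of_int (i - 1)) + 2*pi)"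
    by (simp add: algebra_simps)
  also have "\<dots> = curv a1 a2 (t, s + 2 * pi * of_int (i - 1))" by (rule curv_periodic[OF assms])
  finally show ?case using step2 by simp
qed

lemma smooth_facts:
  assumes "smooth_on U a1" "smooth_on U a2" "p \<in> U"
  shows "a1 differentiable (at p)" "a2 differentiable (at p)"
    "dT a2 differentiable (at p)" "dTh a1 differentiable (at p)"
proof -
  have "Ck (Suc (Suc 0)) U a1" "Ck (Suc (Suc 0)) U a2" using assms unfolding smooth_on_def by blast+
  then show "a1 differentiable (at p)" "a2 differentiable (at p)"
    "dT a2 differentiable (at p)" "dTh a1 differentiable (at p)" using assms(3) by auto
qed

lemma curv_diff:
  fixes a1 a2 :: "real \<times> real \<Rightarrow> real^'n^'n"
  assumes "smooth_on U a1" "smooth_on U a2" "p \<in> U"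
  shows "curv a1 a2 differentiable (at p)"
proof -
  note sf = smooth_facts[OF assms]
  obtain D1 D2 where D: "(a1 has_derivative D1) (at p)" "(a2 has_derivative D2) (at p)"
    using sf(1,2) unfolding differentiable_def by blast
  have "(\<lambda>q. a1 q ** a2 q) differentiable (at p)"
    using bounded_bilinear.FDERIV[OF bb_mm D(1) D(2)] unfolding differentiable_def by blast
  moreover have "(\<lambda>q. a2 q ** a1 q) differentiable (at p)"
    using bounded_bilinear.FDERIV[OF bb_mm D(2) D(1)] unfolding differentiable_def by blast
  ultimately have "(\<lambda>q. lbr (a1 q) (a2 q)) differentiable (at p)"
    unfolding lbr_def by (rule differentiable_diff)
  then show ?thesis unfolding curv_def[abs_def]
    using sf(3,4) by (intro differentiable_add differentiable_diff)
qed

lemma vd_T: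
  fixes f :: "real \<times> real \<Rightarrow> 'a::real_normed_vector"
  assumes "f differentiable (at (s, th))"
  shows "((\<lambda>x. f (x, th)) has_vector_derivative dT f (s, th)) (at s)"
proof -
  have "(\<lambda>x. (x, th)) differentiable (at s)"
    by (auto intro!: derivative_eq_intros simp: differentiable_def)
  then have "(\<lambda>x. f (x, th)) differentiable (at s)"
    using differentiable_compose[of f "\<lambda>x. (x, th)" s UNIV] assms by simp
  then show ?thesis unfolding dT_def by (simp add: vector_derivative_works)
qed

lemma vd_Th:
  fixes f :: "real \<times> real \<Rightarrow> 'a::real_normed_vector"
  assumes "f differentiable (at (s, th))"
  shows "((\<lambda>x. f (s, x)) has_vector_derivative dTh f (s, th)) (at th)"
proof -
  have "(\<lambda>x. (s, x)) differentiable (at th)"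
    by (auto intro!: derivative_eq_intros simp: differentiable_def)
  then have "(\<lambda>x. f (s, x)) differentiable (at th)"
    using differentiable_compose[of f "\<lambda>x. (s, x)" th UNIV] assms by simp
  then show ?thesis unfolding dTh_def by (simp add: vector_derivative_works)
qed
lemma deriv_sq:
  fixes \<phi> :: "real \<Rightarrow> 'a::real_inner"
  assumes "(\<phi> has_vector_derivative D) (at x)" "\<epsilon> > 0"
  shows "((\<lambda>s. sqrt ((norm (\<phi> s))\<^sup>2 + \<epsilon>)) has_real_derivative
           (\<phi> x \<bullet> D) / sqrt ((norm (\<phi> x))\<^sup>2 + \<epsilon>)) (at x)"
proof -
  have d: "(\<phi> has_derivative (\<lambda>h. h *\<^sub>R D)) (at x)" using assms(1) by (simp add: has_vector_derivative_def)
  have "((\<lambda>s. \<phi> s \<bullet> \<phi> s) has_derivative (\<lambda>h. \<phi> x \<bullet> (h *\<^sub>R D) + (h *\<^sub>R D) \<bullet> \<phi> x)) (at x)"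
    by (rule has_derivative_inner[OF d d])
  then have "((\<lambda>s. \<phi> s \<bullet> \<phi> s + \<epsilon>) has_derivative (\<lambda>h. \<phi> x \<bullet> (h *\<^sub>R D) + (h *\<^sub>R D) \<bullet> \<phi> x + 0)) (at x)"
    by (rule has_derivative_add[OF _ has_derivative_const])
  moreover have "(\<lambda>h. \<phi> x \<bullet> (h *\<^sub>R D) + (h *\<^sub>R D) \<bullet> \<phi> x + 0) = (\<lambda>h. (2 * (\<phi> x \<bullet> D)) * h)"
    by (rule ext) (simp add: inner_commute algebra_simps)
  ultimately have gd: "((\<lambda>s. \<phi> s \<bullet> \<phi> s + \<epsilon>) has_real_derivative (2 * (\<phi> x \<bullet> D))) (at x)"
    unfolding has_field_derivative_def by simp
  have pos: "0 < \<phi> x \<bullet> \<phi> x + \<epsilon>" using assms(2) inner_ge_zero[of "\<phi> x"] by linarith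
  have "((\<lambda>s. sqrt (\<phi> s \<bullet> \<phi> s + \<epsilon>)) has_real_derivative
       (inverse (sqrt (\<phi> x \<bullet> \<phi> x + \<epsilon>)) / 2 * (2 * (\<phi> x \<bullet> D)))) (at x)"
    using DERIV_chain2[OF DERIV_real_sqrt[OF pos] gd] .
  moreover have e2: "inverse (sqrt (\<phi> x \<bullet> \<phi> x + \<epsilon>)) / 2 * (2 * (\<phi> x \<bullet> D)) = (\<phi> x \<bullet> D) / sqrt ((norm (\<phi> x))\<^sup>2 + \<epsilon>)"
    unfolding power2_norm_eq_inner by (simp add: field_simps)
  ultimately show ?thesis by (simp only: power2_norm_eq_inner)
qed

lemma lip1d:
  fixes \<phi> \<phi>' :: "real \<Rightarrow> 'a::real_inner"
  assumes ab: "a \<le> b" and der: "\<forall>s\<in>{a..b}. (\<phi> has_vector_derivative \<phi>' s) (at s)"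
    and bd: "\<forall>s\<in>{a..b}. \<bar>\<phi> s \<bullet> \<phi>' s\<bar> \<le> L * norm (\<phi> s)" and L: "L \<ge> 0" and e: "\<epsilon> > 0"
  shows "\<bar>sqrt ((norm (\<phi> b))\<^sup>2 + \<epsilon>) - sqrt ((norm (\<phi> a))\<^sup>2 + \<epsilon>)\<bar> \<le> L * (b - a)"
proof (cases "a = b")
  case True then show ?thesis by simp
next
  case False
  then have "a < b" using ab by simp
  define \<psi> where "\<psi> s = sqrt ((norm (\<phi> s))\<^sup>2 + \<epsilon>)" for s
  have D: "(\<psi> has_real_derivative (\<phi> s \<bullet> \<phi>' s) / \<psi> s) (at s)" if "a \<le> s" "s \<le> b" for s
  proof -
    have "(\<phi> has_vector_derivative \<phi>' s) (at s)" using der that by simp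
    then show ?thesis unfolding \<psi>_def by (rule deriv_sq[OF _ e])
  qed
  obtain z where z: "a < z" "z < b" "\<psi> b - \<psi> a = (b - a) * ((\<phi> z \<bullet> \<phi>' z) / \<psi> z)"
    using MVT2[OF \<open>a < b\<close> D] by blast
  have pz0: "0 < (norm (\<phi> z))\<^sup>2 + \<epsilon>" using e zero_le_power2[of "norm (\<phi> z)"] by linarith
  have pz: "\<psi> z > 0" unfolding \<psi>_def using pz0 by (rule real_sqrt_gt_zero)
  have nz: "norm (\<phi> z) \<le> \<psi> z" unfolding \<psi>_def using e
    by (intro real_le_rsqrt) linarith
  have "\<bar>\<phi> z \<bullet> \<phi>' z\<bar> \<le> L * norm (\<phi> z)" using bd z(1,2) by simp
  also have "\<dots> \<le> L * \<psi> z" using nz L by (rule mult_left_mono)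
  finally have f1: "\<bar>\<phi> z \<bullet> \<phi>' z\<bar> \<le> L * \<psi> z" .
  have "\<bar>\<phi> z \<bullet> \<phi>' z\<bar> / \<psi> z \<le> L" using f1 pos_divide_le_eq[OF pz] by simp
  then have r: "\<bar>(\<phi> z \<bullet> \<phi>' z) / \<psi> z\<bar> \<le> L" using pz by (simp add: abs_divide)
  have "\<bar>\<psi> b - \<psi> a\<bar> = (b - a) * \<bar>(\<phi> z \<bullet> \<phi>' z) / \<psi> z\<bar>"
    using z(3) \<open>a < b\<close> by (simp add: abs_mult)
  also have "\<dots> \<le> (b - a) * L" using r \<open>a < b\<close> by (intro mult_left_mono) auto
  finally show ?thesis unfolding \<psi>_def by (simp add: mult.commute)
qed
lemma lip1d':
  fixes \<phi> \<phi>' :: "real \<Rightarrow> 'a::real_inner"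
  assumes H: "\<And>s. min x y \<le> s \<Longrightarrow> s \<le> max x y \<Longrightarrow>
      (\<phi> has_vector_derivative \<phi>' s) (at s) \<and> \<bar>\<phi> s \<bullet> \<phi>' s\<bar> \<le> L * norm (\<phi> s)"
    and L: "L \<ge> 0" and e: "\<epsilon> > 0"
  shows "\<bar>sqrt ((norm (\<phi> x))\<^sup>2 + \<epsilon>) - sqrt ((norm (\<phi> y))\<^sup>2 + \<epsilon>)\<bar> \<le> L * \<bar>x - y\<bar>"
proof (cases "x \<le> y")
  case True
  have "\<bar>sqrt ((norm (\<phi> y))\<^sup>2 + \<epsilon>) - sqrt ((norm (\<phi> x))\<^sup>2 + \<epsilon>)\<bar> \<le> L * (y - x)"
    using H True by (intro lip1d[OF True _ _ L e, where \<phi>'=\<phi>']) auto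
  then show ?thesis using True by (simp add: abs_minus_commute)
next
  case False
  have "\<bar>sqrt ((norm (\<phi> x))\<^sup>2 + \<epsilon>) - sqrt ((norm (\<phi> y))\<^sup>2 + \<epsilon>)\<bar> \<le> L * (x - y)"
    using H False by (intro lip1d[OF _ _ _ L e, where \<phi>'=\<phi>']) auto
  then show ?thesis using False by simp
qed
lemma core:
  fixes G :: "(real^'n^'n) set" and a1 a2 b1 b2 :: "real \<times> real \<Rightarrow> real^'n^'n" and lam :: "real \<Rightarrow> real"
  assumes G: "compact_matrix_group G" and T: "T \<ge> 1" and dpos: "\<delta> > 0" and e: "\<epsilon> > 0"
    and sm1: "smooth_on ({t. \<bar>t\<bar> < T + \<epsilon>} \<times> UNIV) a1"
    and sm2: "smooth_on ({t. \<bar>t\<bar> < T + \<epsilon>} \<times> UNIV) a2"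
    and per: "\<forall>t s. a1 (t, s + 2*pi) = a1 (t, s) \<and> a2 (t, s + 2*pi) = a2 (t, s)"
    and lie: "\<forall>p\<in>{-T..T} \<times> UNIV. a1 p \<in> lie_alg G \<and> a2 p \<in> lie_alg G \<and> b1 p \<in> lie_alg G \<and> b2 p \<in> lie_alg G"
    and eq: "\<forall>p\<in>{-T..T} \<times> UNIV. DAstar1 a1 a2 (curv a1 a2) p = lam (fst p) *\<^sub>R b1 p \<and>
                          DAstar2 a1 a2 (curv a1 a2) p = lam (fst p) *\<^sub>R b2 p"
    and bB: "\<forall>p\<in>{-T..T} \<times> UNIV. sqrt ((norm (b1 p))\<^sup>2 + (norm (b2 p))\<^sup>2) \<le> CB"
    and bl: "\<forall>t\<in>{-T..T}. \<bar>lam t\<bar> \<le> C0 * \<delta> * exp (\<bar>t\<bar> - T)"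
    and L2: "\<forall>t\<in>{0<..T}. L2norm (cyl t) (curv a1 a2) \<le> C0 * \<delta> * exp (t - T)"
    and t: "t \<in> {1..T}" and p: "p \<in> {-(t-1)..t-1} \<times> UNIV"
  shows "norm (curv a1 a2 p) \<le> (2*\<bar>CB\<bar>+1)*\<bar>C0\<bar> * \<delta> * exp (t - T)"
proof -
  define f where "f = curv a1 a2"
  define K where "K = C0 * \<delta> * exp (t - T)"
  define L where "L = CB * K"
  define U where "U = {t. \<bar>t\<bar> < T + \<epsilon>} \<times> (UNIV :: real set)"
  have t1: "1 \<le> t" "t \<le> T" using t by auto
  have C0: "C0 \<ge> 0"
  proof -
    have "0 \<in> {-T..T}" using T by simp
    then have "\<bar>lam 0\<bar> \<le> C0 * \<delta> * exp (\<bar>0\<bar> - T)" using bl by blast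
    then have "0 \<le> C0 * (\<delta> * exp (- T))" by (simp add: mult.assoc)
    moreover have "\<delta> * exp (- T) > 0" using dpos by simp
    ultimately show ?thesis by (simp add: zero_le_mult_iff)
  qed
  have CB: "CB \<ge> 0"
  proof -
    have "(0, 0) \<in> {-T..T} \<times> (UNIV :: real set)" using T by simp
    then have "sqrt ((norm (b1 (0,0)))\<^sup>2 + (norm (b2 (0,0)))\<^sup>2) \<le> CB" using bB by blast
    moreover have "0 \<le> sqrt ((norm (b1 (0,0)))\<^sup>2 + (norm (b2 (0,0)))\<^sup>2)" by simp
    ultimately show ?thesis by linarith
  qed
  have K0: "K \<ge> 0" unfolding K_def using C0 dpos by simp
  have L0: "L \<ge> 0" unfolding L_def using CB K0 by simp
  have ptw: "f differentiable (at q) \<and> \<bar>f q \<bullet> dT f q\<bar> \<le> L * norm (f q) \<and> \<bar>f q \<bullet> dTh f q\<bar> \<le> L * norm (f q)"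
    if q: "\<bar>fst q\<bar> \<le> t - 1/2" for q
  proof -
    obtain s th where qs: "q = (s, th)" by (cases q)
    have sT: "\<bar>s\<bar> \<le> T" using q qs t1 by simp
    have qU: "q \<in> U" unfolding U_def using sT e qs by simp
    have diff: "f differentiable (at q)" unfolding f_def using curv_diff[OF sm1 sm2] qU U_def by blast
    have qT: "q \<in> {-T..T} \<times> UNIV" using sT qs by auto
    have sk1: "skw (a1 q)" and sk2: "skw (a2 q)" using lie qT lie_skw[OF G] by blast+
    have e1: "dTh f q + lbr (a2 q) (f q) = lam s *\<^sub>R b1 q"
      using eq qT qs unfolding f_def DAstar1_def by auto
    have e2: "- (dT f q + lbr (a1 q) (f q)) = lam s *\<^sub>R b2 q"
      using eq qT qs unfolding f_def DAstar2_def by auto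
    have i1: "f q \<bullet> dTh f q = lam s * (f q \<bullet> b1 q)"
    proof -
      have "dTh f q = lam s *\<^sub>R b1 q - lbr (a2 q) (f q)" using e1 by (simp add: algebra_simps)
      then show ?thesis using skw_inner_lbr[OF sk2, of "f q"] by (simp add: inner_diff_right)
    qed
    have i2: "f q \<bullet> dT f q = - (lam s * (f q \<bullet> b2 q))"
    proof -
      have "dT f q + lbr (a1 q) (f q) = - (lam s *\<^sub>R b2 q)" using e2 by (metis minus_minus)
      then have "dT f q = - (lam s *\<^sub>R b2 q) - lbr (a1 q) (f q)" by (simp add: eq_diff_eq)
      then show ?thesis using skw_inner_lbr[OF sk1, of "f q"] by (simp add: inner_diff_right)
    qed
    have lamK: "\<bar>lam s\<bar> \<le> K"
    proof -
      have "\<bar>lam s\<bar> \<le> C0 * \<delta> * exp (\<bar>s\<bar> - T)"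
        using bl sT abs_le_iff[of s T] by (simp add: atLeastAtMost_iff)
      also have "\<dots> \<le> C0 * \<delta> * exp (t - T)"
        using C0 dpos q qs by (intro mult_left_mono) auto
      finally show ?thesis unfolding K_def .
    qed
    have sq: "sqrt ((norm (b1 q))\<^sup>2 + (norm (b2 q))\<^sup>2) \<le> CB" using bB qT by blast
    have nb1: "norm (b1 q) \<le> CB"
    proof -
      have "norm (b1 q) \<le> sqrt ((norm (b1 q))\<^sup>2 + (norm (b2 q))\<^sup>2)" by (intro real_le_rsqrt) simp
      then show ?thesis using sq by linarith
    qed
    have nb2: "norm (b2 q) \<le> CB"
    proof -
      have "norm (b2 q) \<le> sqrt ((norm (b1 q))\<^sup>2 + (norm (b2 q))\<^sup>2)" by (intro real_le_rsqrt) simp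
      then show ?thesis using sq by linarith
    qed
    have gen: "\<bar>lam s * (f q \<bullet> b)\<bar> \<le> L * norm (f q)" if nb: "norm b \<le> CB" for b
    proof -
      have "\<bar>lam s * (f q \<bullet> b)\<bar> = \<bar>lam s\<bar> * \<bar>f q \<bullet> b\<bar>" by (simp add: abs_mult)
      also have "\<dots> \<le> K * (norm (f q) * norm b)"
        using lamK K0 Cauchy_Schwarz_ineq2[of "f q" b] by (intro mult_mono) auto
      also have "\<dots> \<le> K * (norm (f q) * CB)"
        using nb K0 by (intro mult_left_mono) (auto intro: mult_left_mono)
      finally show ?thesis unfolding L_def by (simp add: algebra_simps)
    qed
    show ?thesis using diff gen[OF nb1] gen[OF nb2] i1 i2 by simp
  qed
  obtain s0 th where ps: "p = (s0, th)" by (cases p)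
  have s0: "\<bar>s0\<bar> \<le> t - 1" using p ps by auto
  define k where "k = \<lfloor>th / (2*pi)\<rfloor>"
  define th0 where "th0 = th - 2 * pi * of_int k"
  have k1: "of_int k \<le> th / (2*pi)" "th / (2*pi) < of_int k + 1" unfolding k_def by linarith+
  have th0: "0 \<le> th0" "th0 < 2*pi"
  proof -
    have "2*pi * of_int k \<le> th" using k1(1) pi_gt_zero by (simp add: le_divide_eq mult.commute)
    moreover have "th < 2*pi * (of_int k + 1)" using k1(2) pi_gt_zero by (simp add: divide_less_eq mult.commute)
    ultimately show "0 \<le> th0" "th0 < 2*pi" unfolding th0_def by (auto simp: algebra_simps)
  qed
  have fp: "f p = f (s0, th0)"
  proof -
    have "f (s0, th0 + 2 * pi * of_int k) = f (s0, th0)" unfolding f_def by (rule curv_periodic_int[OF per])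
    moreover have "th0 + 2 * pi * of_int k = th" unfolding th0_def by simp
    ultimately show ?thesis using ps by simp
  qed
  define tha where "tha = (if th0 \<le> pi then th0 else th0 - 1)"
  have tha: "tha \<le> th0" "th0 \<le> tha + 1" "0 \<le> tha" "tha + 1 \<le> 2*pi"
    unfolding tha_def using th0 pi_gt3 by auto
  define R where "R = cbox (s0 - 1/2, tha) (s0 + 1/2, tha + 1)"
  have Rmem: "q \<in> R \<longleftrightarrow> s0 - 1/2 \<le> fst q \<and> fst q \<le> s0 + 1/2 \<and> tha \<le> snd q \<and> snd q \<le> tha + 1" for q
    unfolding R_def by (cases q) (simp add: cbox_Pair_eq)
  have cylc: "cyl t = cbox (-t, 0) (t, 2*pi)" unfolding cyl_def by (simp add: cbox_Pair_eq)
  have Rsub: "R \<subseteq> cyl t"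
  proof
    fix q assume "q \<in> R"
    then show "q \<in> cyl t" using Rmem[of q] s0 tha unfolding cyl_def by (cases q) auto
  qed
  define M where "M = norm (f (s0, th0))"
  have lipq: "sqrt (M\<^sup>2 + \<eta>) \<le> sqrt ((norm (f q))\<^sup>2 + \<eta>) + 3/2 * L" if q: "q \<in> R" and eta: "\<eta> > 0" for q \<eta>
  proof -
    obtain s1 th1 where qs: "q = (s1, th1)" by (cases q)
    have rr: "s0 - 1/2 \<le> s1 \<and> s1 \<le> s0 + 1/2 \<and> tha \<le> th1 \<and> th1 \<le> tha + 1" using Rmem[of q] q qs by simp
    have s1: "\<bar>s1 - s0\<bar> \<le> 1/2" "\<bar>th1 - th0\<bar> \<le> 1" using rr tha unfolding abs_le_iff by linarith+
    have st1: "\<bar>s1\<bar> \<le> t - 1/2" using s1 s0 by linarith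
    have A: "\<bar>sqrt ((norm (f (s0, th0)))\<^sup>2 + \<eta>) - sqrt ((norm (f (s1, th0)))\<^sup>2 + \<eta>)\<bar> \<le> L * \<bar>s0 - s1\<bar>"
    proof (rule lip1d'[where \<phi> = "\<lambda>x. f (x, th0)" and \<phi>' = "\<lambda>x. dT f (x, th0)", OF _ L0 eta])
      fix s assume "min s0 s1 \<le> s" "s \<le> max s0 s1"
      then have "\<bar>fst (s, th0)\<bar> \<le> t - 1/2" using s0 s1(1) unfolding abs_le_iff min_def max_def
        by (simp split: if_splits)
      from ptw[OF this] show "((\<lambda>x. f (x, th0)) has_vector_derivative dT f (s, th0)) (at s) \<and>
          \<bar>f (s, th0) \<bullet> dT f (s, th0)\<bar> \<le> L * norm (f (s, th0))"
        using vd_T by blast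
    qed
    have B: "\<bar>sqrt ((norm (f (s1, th0)))\<^sup>2 + \<eta>) - sqrt ((norm (f (s1, th1)))\<^sup>2 + \<eta>)\<bar> \<le> L * \<bar>th0 - th1\<bar>"
    proof (rule lip1d'[where \<phi> = "\<lambda>x. f (s1, x)" and \<phi>' = "\<lambda>x. dTh f (s1, x)", OF _ L0 eta])
      fix s assume "min th0 th1 \<le> s" "s \<le> max th0 th1"
      have "\<bar>fst (s1, s)\<bar> \<le> t - 1/2" using st1 by simp
      from ptw[OF this] show "((\<lambda>x. f (s1, x)) has_vector_derivative dTh f (s1, s)) (at s) \<and>
          \<bar>f (s1, s) \<bullet> dTh f (s1, s)\<bar> \<le> L * norm (f (s1, s))"
        using vd_Th by blast
    qed
    have "L * \<bar>s0 - s1\<bar> \<le> L * (1/2)" using s1 L0 by (intro mult_left_mono) (auto simp: abs_minus_commute)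
    moreover have "L * \<bar>th0 - th1\<bar> \<le> L * 1" using s1 L0 by (intro mult_left_mono) (auto simp: abs_minus_commute)
    ultimately show ?thesis using A B unfolding M_def qs abs_le_iff by linarith
  qed
  have fcont: "continuous_on (cyl t) (\<lambda>q. (norm (f q))\<^sup>2)"
  proof -
    have "continuous_on (cyl t) f"
    proof (rule continuous_at_imp_continuous_on, rule ballI)
      fix q assume "q \<in> cyl t"
      then have "q \<in> {t. \<bar>t\<bar> < T + \<epsilon>} \<times> UNIV" using t1 e unfolding cyl_def by auto
      then have "f differentiable (at q)" unfolding f_def by (rule curv_diff[OF sm1 sm2])
      then show "isCont f q" by (rule differentiable_imp_continuous_within)
    qed
    then show ?thesis by (intro continuous_intros)
  qed
  have intC: "(\<lambda>q. (norm (f q))\<^sup>2) integrable_on cyl t"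
    using fcont unfolding cylc by (rule integrable_continuous)
  have intR: "(\<lambda>q. (norm (f q))\<^sup>2) integrable_on R"
    using continuous_on_subset[OF fcont Rsub] unfolding R_def by (rule integrable_continuous)
  have IC: "integral (cyl t) (\<lambda>q. (norm (f q))\<^sup>2) \<le> K\<^sup>2"
  proof -
    have "t \<in> {0<..T}" using t1 by simp
    then have "sqrt (integral (cyl t) (\<lambda>q. (norm (f q))\<^sup>2)) \<le> K"
      using L2 unfolding L2norm_def f_def K_def by blast
    moreover have "0 \<le> integral (cyl t) (\<lambda>q. (norm (f q))\<^sup>2)"
      by (rule integral_nonneg[OF intC]) simp
    ultimately show ?thesis using K0 by (metis real_sqrt_le_iff real_sqrt_pow2 power_mono real_sqrt_ge_zero)
  qed
  have IR: "integral R (\<lambda>q. (norm (f q))\<^sup>2) \<le> K\<^sup>2"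
    using integral_subset_le[OF Rsub intR intC] IC by simp
  have contR: "measure lborel R = 1" unfolding R_def by (simp add: content_Pair)
  have bnd: "M \<le> 3/2 * L + K + sqrt \<eta>" if eta: "\<eta> > 0" for \<eta>
  proof -
    define N where "N = sqrt (M\<^sup>2 + \<eta>)"
    have MN: "M \<le> N" unfolding N_def using eta by (intro real_le_rsqrt) simp
    show ?thesis
    proof (cases "N \<le> 3/2 * L")
      case True then show ?thesis using MN K0 real_sqrt_ge_zero[of \<eta>] eta by linarith
    next
      case False
      define c where "c = N - 3/2 * L"
      have c0: "c > 0" using False unfolding c_def by simp
      have lo: "c\<^sup>2 - \<eta> \<le> (norm (f q))\<^sup>2" if q: "q \<in> R" for q
      proof -
        have "c \<le> sqrt ((norm (f q))\<^sup>2 + \<eta>)" using lipq[OF q eta] unfolding c_def N_def by linarith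
        then have "c\<^sup>2 \<le> (sqrt ((norm (f q))\<^sup>2 + \<eta>))\<^sup>2" using c0 by (intro power_mono) auto
        also have "\<dots> = (norm (f q))\<^sup>2 + \<eta>" using eta by (simp add: add_nonneg_nonneg)
        finally show ?thesis by simp
      qed
      have "integral R (\<lambda>q. c\<^sup>2 - \<eta>) \<le> integral R (\<lambda>q. (norm (f q))\<^sup>2)"
        using lo intR unfolding R_def by (intro integral_le) auto
      moreover have "integral R (\<lambda>q. c\<^sup>2 - \<eta>) = c\<^sup>2 - \<eta>"
        using contR unfolding R_def by (simp only: integral_const) simp
      ultimately have "c\<^sup>2 - \<eta> \<le> K\<^sup>2" using IR by linarith
      moreover have "(K + sqrt \<eta>)\<^sup>2 = K\<^sup>2 + 2 * K * sqrt \<eta> + \<eta>"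
        using eta by (simp add: power2_sum)
      moreover have "0 \<le> 2 * K * sqrt \<eta>" using K0 eta by simp
      ultimately have "c\<^sup>2 \<le> (K + sqrt \<eta>)\<^sup>2" by linarith
      moreover have "0 \<le> K + sqrt \<eta>" using K0 eta by simp
      ultimately have "c \<le> K + sqrt \<eta>" by (rule power2_le_imp_le)
      then show ?thesis using MN c_def by linarith
    qed
  qed
  have MB: "M \<le> 3/2 * L + K"
  proof (rule ccontr)
    assume "\<not> M \<le> 3/2 * L + K"
    then have g: "M - (3/2 * L + K) > 0" by simp
    define \<eta> where "\<eta> = ((M - (3/2 * L + K)) / 2)\<^sup>2"
    have ep: "\<eta> > 0" unfolding \<eta>_def using g by simp
    have "sqrt \<eta> * 2 = M - (3/2 * L + K)" unfolding \<eta>_def using g by simp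
    then show False using bnd[OF ep] g by linarith
  qed
  have "3/2 * L + K = (3/2 * CB + 1) * (C0 * \<delta> * exp (t - T))" unfolding L_def K_def by (simp add: algebra_simps)
  also have "\<dots> \<le> (2 * CB + 1) * (C0 * \<delta> * exp (t - T))"
    by (rule mult_right_mono) (use CB C0 dpos in auto)
  also have "\<dots> = (2*\<bar>CB\<bar>+1)*\<bar>C0\<bar> * \<delta> * exp (t - T)"
    using CB C0 by (simp add: mult.assoc)
  finally show ?thesis using MB fp unfolding M_def f_def by simp
qed

theorem lemma3p1:
  fixes G :: "(real^'n^'n) set" and C0 CB Cc :: real
  assumes "compact_matrix_group G"
  shows "\<exists>C. \<forall>T \<delta> (a1 :: real \<times> real \<Rightarrow> real^'n^'n) a2 b1 b2 (lam :: real \<Rightarrow> real).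
    T \<ge> 1 \<and> \<delta> > 0 \<and>
    (\<exists>\<epsilon>>0. smooth_on ({t. \<bar>t\<bar> < T + \<epsilon>} \<times> UNIV) a1 \<and> smooth_on ({t. \<bar>t\<bar> < T + \<epsilon>} \<times> UNIV) a2) \<and>
    (\<forall>t s. a1 (t, s + 2*pi) = a1 (t, s) \<and> a2 (t, s + 2*pi) = a2 (t, s)) \<and>
    (\<forall>p\<in>{-T..T} \<times> UNIV. a1 p \<in> lie_alg G \<and> a2 p \<in> lie_alg G \<and> b1 p \<in> lie_alg G \<and> b2 p \<in> lie_alg G) \<and>
    (\<forall>t s. b1 (t, s + 2*pi) = b1 (t, s) \<and> b2 (t, s + 2*pi) = b2 (t, s)) \<and>
    (\<forall>p\<in>{-T..T} \<times> UNIV. DAstar1 a1 a2 (curv a1 a2) p = lam (fst p) *\<^sub>R b1 p \<and>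
                          DAstar2 a1 a2 (curv a1 a2) p = lam (fst p) *\<^sub>R b2 p) \<and>
    (\<forall>p\<in>{-T..T} \<times> UNIV. sqrt ((norm (b1 p))\<^sup>2 + (norm (b2 p))\<^sup>2) \<le> CB) \<and>
    (\<forall>t\<in>{-T..T}. \<bar>lam t\<bar> \<le> C0 * \<delta> * exp (\<bar>t\<bar> - T)) \<and>
    (\<forall>t\<in>{0<..T}. L2norm (cyl t) (curv a1 a2) \<le> C0 * \<delta> * exp (t - T)) \<and>
    (\<forall>x. \<bar>fst x\<bar> \<le> T - 1 \<longrightarrow> coulomb_gauge_on G Cc a1 a2 (ball x 1))
    \<longrightarrow> (\<forall>t\<in>{1..T}. \<forall>p\<in>{-(t-1)..t-1} \<times> UNIV. norm (curv a1 a2 p) \<le> C * \<delta> * exp (t - T))"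
proof (intro exI[of _ "(2*\<bar>CB\<bar>+1)*\<bar>C0\<bar>"] allI impI ballI)
  fix T \<delta> and a1 a2 b1 b2 :: "real \<times> real \<Rightarrow> real^'n^'n" and lam :: "real \<Rightarrow> real" and t :: real and p :: "real \<times> real"
  assume H: "T \<ge> 1 \<and> \<delta> > 0 \<and>
    (\<exists>\<epsilon>>0. smooth_on ({t. \<bar>t\<bar> < T + \<epsilon>} \<times> UNIV) a1 \<and> smooth_on ({t. \<bar>t\<bar> < T + \<epsilon>} \<times> UNIV) a2) \<and>
    (\<forall>t s. a1 (t, s + 2*pi) = a1 (t, s) \<and> a2 (t, s + 2*pi) = a2 (t, s)) \<and>
    (\<forall>p\<in>{-T..T} \<times> UNIV. a1 p \<in> lie_alg G \<and> a2 p \<in> lie_alg G \<and> b1 p \<in> lie_alg G \<and> b2 p \<in> lie_alg G) \<and>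
    (\<forall>t s. b1 (t, s + 2*pi) = b1 (t, s) \<and> b2 (t, s + 2*pi) = b2 (t, s)) \<and>
    (\<forall>p\<in>{-T..T} \<times> UNIV. DAstar1 a1 a2 (curv a1 a2) p = lam (fst p) *\<^sub>R b1 p \<and>
                          DAstar2 a1 a2 (curv a1 a2) p = lam (fst p) *\<^sub>R b2 p) \<and>
    (\<forall>p\<in>{-T..T} \<times> UNIV. sqrt ((norm (b1 p))\<^sup>2 + (norm (b2 p))\<^sup>2) \<le> CB) \<and>
    (\<forall>t\<in>{-T..T}. \<bar>lam t\<bar> \<le> C0 * \<delta> * exp (\<bar>t\<bar> - T)) \<and>
    (\<forall>t\<in>{0<..T}. L2norm (cyl t) (curv a1 a2) \<le> C0 * \<delta> * exp (t - T)) \<and>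
    (\<forall>x. \<bar>fst x\<bar> \<le> T - 1 \<longrightarrow> coulomb_gauge_on G Cc a1 a2 (ball x 1))"
    and t: "t \<in> {1..T}" and p: "p \<in> {-(t-1)..t-1} \<times> UNIV"
  have ex: "\<exists>\<epsilon>>0. smooth_on ({t. \<bar>t\<bar> < T + \<epsilon>} \<times> UNIV) a1 \<and> smooth_on ({t. \<bar>t\<bar> < T + \<epsilon>} \<times> UNIV) a2"
    by (rule H[THEN conjunct2, THEN conjunct2, THEN conjunct1])
  then obtain \<epsilon> where e: "\<epsilon> > 0"
    and sm1: "smooth_on ({t. \<bar>t\<bar> < T + \<epsilon>} \<times> UNIV) a1"
    and sm2: "smooth_on ({t. \<bar>t\<bar> < T + \<epsilon>} \<times> UNIV) a2" by blast
  show "norm (curv a1 a2 p) \<le> (2*\<bar>CB\<bar>+1)*\<bar>C0\<bar> * \<delta> * exp (t - T)"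
    by (rule core[OF assms H[THEN conjunct1] H[THEN conjunct2, THEN conjunct1] e sm1 sm2 H[THEN conjunct2, THEN conjunct2, THEN conjunct2, THEN conjunct1] H[THEN conjunct2, THEN conjunct2, THEN conjunct2, THEN conjunct2, THEN conjunct1] H[THEN conjunct2, THEN conjunct2, THEN conjunct2, THEN conjunct2, THEN conjunct2, THEN conjunct2, THEN conjunct1] H[THEN conjunct2, THEN conjunct2, THEN conjunct2, THEN conjunct2, THEN conjunct2, THEN conjunct2, THEN conjunct2, THEN conjunct1] H[THEN conjunct2, THEN conjunct2, THEN conjunct2, THEN conjunct2, THEN conjunct2, THEN conjunct2, THEN conjunct2, THEN conjunct2, THEN conjunct1] H[THEN conjunct2, THEN conjunct2, THEN conjunct2, THEN conjunct2, THEN conjunct2, THEN conjunct2, THEN conjunct2, THEN conjunct2, THEN conjunct2, THEN conjunct1] t p])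
qed

end
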